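(* In the safe linear bandit setting with ROFUL as described in the context (with all its standing assumptions), on the event $\mathcal{E}_{\mathrm{conf}}$, for all $t\in[T]$, $$\theta^\top(\tilde x_t-x_t)\le S_\theta\frac{2\beta_t}{b}\|x_t\|_{V_t^{-1}}.$$
   Context: Safe linear bandit setting: at round $t$ the learner plays $x_t$ in a closed set $\mathcal{X}\subseteq\mathbb{R}^d$ and observes $y_t=\theta^\top x_t+\epsilon_t$, $z_t=a^\top x_t+\eta_t$, with $\theta,a$ unknown and $b>0$ known; $\mathcal{Y}=\{x\in\mathcal{X}:a^\top x\le b\}$, $x_*\in\arg\max_{\mathcal{Y}}\theta^\top x$. Standing assumptions: $\mathcal{X}$ star-convex w.r.t. the origin, $\|x\|\le1$ on $\mathcal{X}$, $\theta^\top x_*>0$; $\|a\|\le S_a$, $\|\theta\|\le S_\theta$, $S=\max(S_a,S_\theta)$, $\nu=b/S_a\le1$. Parameters $\rho>0$, $\delta\in(0,1)$, $\lambda\ge1$. ROFUL: $V_t=\lambda I+\sum_{k<t}x_kx_k^\top$, $\hat a_t=V_t^{-1}\sum_{k<t}x_kz_k$, $\hat\theta_t=V_t^{-1}\sum_{k<t}x_ky_k$, $\beta_t=\rho\sqrt{d\log\left(\frac{1+(t-1)/\lambda}{\delta/2}\right)}+\sqrt\lambda S$, $\|x\|_M=\sqrt{x^\top Mx}$; $\mathcal{Y}_t^p=\{x\in\mathcal{X}:\hat a_t^\top x+\beta_t\|x\|_{V_t^{-1}}\le b\}$, $\mathcal{Y}_t^o=\{x\in\mathcal{X}:\hat a_t^\top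 x-\beta_t\|x\|_{V_t^{-1}}\le b\}$; $\tilde x_t\in\arg\max_{x\in\mathcal{Y}_t^o}(\hat\theta_t^\top x+\beta_t\|x\|_{V_t^{-1}})$; $\gamma_t=\max(\min(\nu/\|\tilde x_t\|,1),\max\{\mu\in[0,1]:\mu\tilde x_t\in\mathcal{Y}_t^p\})$; play $x_t=\gamma_t\tilde x_t$. $\mathcal{E}_{\mathrm{conf}}$: the event that $|x^\top(\hat\theta_t-\theta)|\le\beta_t\|x\|_{V_t^{-1}}$ and $|x^\top(\hat a_t-a)|\le\beta_t\|x\|_{V_t^{-1}}$ for all $x\in\mathcal{X}$ and all $t\ge1$. *)

theory Defs
  imports "HOL-Analysis.Analysis"
begin

text \<open>Safe linear bandits, ROFUL. Rounds are indexed t = 1, 2, ...; vectors live in real^'d,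
  with d = CARD('d).\<close>

definition outer :: "real^'d \<Rightarrow> real^'d^'d" where
  "outer u = (\<chi> i j. u$i * u$j)"

definition Vmat :: "real \<Rightarrow> (nat \<Rightarrow> real^'d) \<Rightarrow> nat \<Rightarrow> real^'d^'d" where
  "Vmat lam x t = lam *\<^sub>R mat 1 + (\<Sum>k\<in>{1..<t}. outer (x k))"

definition wnorm :: "real^'d^'d \<Rightarrow> real^'d \<Rightarrow> real" where
  "wnorm M u = sqrt (u \<bullet> (M *v u))"

definition est :: "real \<Rightarrow> (nat \<Rightarrow> real^'d) \<Rightarrow> (nat \<Rightarrow> real) \<Rightarrow> nat \<Rightarrow> real^'d" where
  "est lam x obs t = matrix_inv (Vmat lam x t) *v (\<Sum>k\<in>{1..<t}. obs k *\<^sub>R x k)"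

definition beta :: "real \<Rightarrow> nat \<Rightarrow> real \<Rightarrow> real \<Rightarrow> real \<Rightarrow> nat \<Rightarrow> real" where
  "beta rho d delta lam S t =
     rho * sqrt (real d * ln ((1 + (real t - 1) / lam) / (delta / 2))) + sqrt lam * S"

definition Yp :: "(real^'d) set \<Rightarrow> real \<Rightarrow> real^'d \<Rightarrow> real \<Rightarrow> real^'d^'d \<Rightarrow> (real^'d) set" where
  "Yp X b ahat bt Vinv = {u \<in> X. ahat \<bullet> u + bt * wnorm Vinv u \<le> b}"

definition Yo :: "(real^'d) set \<Rightarrow> real \<Rightarrow> real^'d \<Rightarrow> real \<Rightarrow> real^'d^'d \<Rightarrow> (real^'d) set" where
  "Yo X b ahat bt Vinv = {u \<in> X. ahat \<bullet> u - bt * wnorm Vinv u \<le> b}"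

text \<open>gamma_t = max(min(nu/\<parallel>x~\<parallel>,1), max{mu in [0,1]. mu x~ in Y_t^p}).
  (When x~ = 0 the value of gamma is irrelevant since x_t = gamma x~ = 0.)\<close>
definition gam :: "real \<Rightarrow> (real^'d) set \<Rightarrow> real^'d \<Rightarrow> real" where
  "gam nu Ypt xt = max (min (nu / norm xt) 1) (Sup {mu \<in> {0..1}. mu *\<^sub>R xt \<in> Ypt})"

end

theory Submission
  imports Defs
begin

lemma wn_scale: "wnorm M (c *\<^sub>R u) = \<bar>c\<bar> * wnorm M u"
proof -
  have "(c *\<^sub>R u) \<bullet> (M *v (c *\<^sub>R u)) = c^2 * (u \<bullet> (M *v u))"
    by (simp add: matrix_vector_mult_scaleR power2_eq_square)
  then show ?thesis unfolding wnorm_def by (simp add: real_sqrt_mult)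
qed

theorem lemma5:
  fixes X :: "(real^'d) set"
    and theta a :: "real^'d"
    and b S_a S_theta rho delta lam :: real
    and eps eta :: "nat \<Rightarrow> real"
    and x xt :: "nat \<Rightarrow> real^'d"
    and xstar :: "real^'d"
    and T :: nat
  defines "nu \<equiv> b / S_a"
    and "Y \<equiv> {u \<in> X. a \<bullet> u \<le> b}"
    and "Vinv \<equiv> (\<lambda>t. matrix_inv (Vmat lam x t))"
    and "ahat \<equiv> est lam x (\<lambda>k. a \<bullet> x k + eta k)"
    and "thhat \<equiv> est lam x (\<lambda>k. theta \<bullet> x k + eps k)"
    and "bt \<equiv> beta rho CARD('d) delta lam (max S_a S_theta)"
  assumes X_closed: "closed X"
    and X_star: "\<And>u \<mu>. u \<in> X \<Longrightarrow> 0 \<le> \<mu> \<Longrightarrow> \<mu> \<le> 1 \<Longrightarrow> \<mu> *\<^sub>R u \<in> X"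
    and X_bounded: "\<And>u. u \<in> X \<Longrightarrow> norm u \<le> 1"
    and b_pos: "b > 0"
    and S_a_pos: "S_a > 0"
    and a_bound: "norm a \<le> S_a"
    and theta_bound: "norm theta \<le> S_theta"
    and nu_le: "nu \<le> 1"
    and rho_pos: "rho > 0"
    and delta: "0 < delta" "delta < 1"
    and lam: "lam \<ge> 1"
    and xstar_in: "xstar \<in> Y"
    and xstar_opt: "\<And>u. u \<in> Y \<Longrightarrow> theta \<bullet> u \<le> theta \<bullet> xstar"
    and xstar_pos: "theta \<bullet> xstar > 0"
    \<comment> \<open>ROFUL: optimistic action and played action, for every round t \<ge> 1\<close>
    and xt_in: "\<And>t. t \<ge> 1 \<Longrightarrow> xt t \<in> Yo X b (ahat t) (bt t) (Vinv t)"
    and xt_opt: "\<And>t u. t \<ge> 1 \<Longrightarrow> u \<in> Yo X b (ahat t) (bt t) (Vinv t) \<Longrightarrow>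
        thhat t \<bullet> u + bt t * wnorm (Vinv t) u
          \<le> thhat t \<bullet> xt t + bt t * wnorm (Vinv t) (xt t)"
    and x_play: "\<And>t. t \<ge> 1 \<Longrightarrow>
        x t = gam nu (Yp X b (ahat t) (bt t) (Vinv t)) (xt t) *\<^sub>R xt t"
    \<comment> \<open>the event E_conf\<close>
    and conf_theta: "\<And>t u. t \<ge> 1 \<Longrightarrow> u \<in> X \<Longrightarrow>
        \<bar>u \<bullet> (thhat t - theta)\<bar> \<le> bt t * wnorm (Vinv t) u"
    and conf_a: "\<And>t u. t \<ge> 1 \<Longrightarrow> u \<in> X \<Longrightarrow>
        \<bar>u \<bullet> (ahat t - a)\<bar> \<le> bt t * wnorm (Vinv t) u"
  shows "\<forall>t\<in>{1..T}. theta \<bullet> (xt t - x t) \<le> S_theta * (2 * bt t / b) * wnorm (Vinv t) (x t)"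
proof
  fix t assume "t \<in> {1..T}"
  then have t1: "t \<ge> 1" by simp
  define M where "M = Vinv t"
  define B where "B = bt t"
  define A where "A = ahat t"
  define u where "u = xt t"
  define w where "w = wnorm M u"
  define P where "P = Yp X b A B M"
  define SS where "SS = {mu \<in> {0..1::real}. mu *\<^sub>R u \<in> P}"
  define g where "g = gam nu P u"
  have xg: "x t = g *\<^sub>R u" using x_play[OF t1] unfolding g_def P_def A_def B_def M_def u_def by simp
  have uo: "u \<in> Yo X b A B M" using xt_in[OF t1] unfolding u_def A_def B_def M_def by simp
  hence uX: "u \<in> X" and uo2: "A \<bullet> u - B * w \<le> b" unfolding Yo_def w_def by auto
  have "\<bar>u \<bullet> (A - a)\<bar> \<le> B * w" using conf_a[OF t1 uX] unfolding A_def B_def w_def M_def by simp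
  hence Bw: "B * w \<ge> 0" and Aa: "A \<bullet> u \<le> a \<bullet> u + B * w"
    by (auto simp: inner_diff_right inner_commute)
  have thu: "theta \<bullet> u \<le> S_theta * norm u"
    using Cauchy_Schwarz_ineq2[of theta u] theta_bound norm_ge_zero
    by (smt (verit) mult_right_mono)
  have Sth: "S_theta \<ge> 0" using theta_bound norm_ge_zero[of theta] by linarith
  have nu1: "norm u \<le> 1" using X_bounded uX by simp
  have memS: "mu \<in> SS" if "0 \<le> mu" "mu \<le> 1" "mu * (A \<bullet> u + B * w) \<le> b" for mu
  proof -
    have "mu *\<^sub>R u \<in> X" using X_star uX that by simp
    moreover have "A \<bullet> (mu *\<^sub>R u) + B * wnorm M (mu *\<^sub>R u) = mu * (A \<bullet> u + B * w)"
      using that by (simp add: wn_scale w_def algebra_simps)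
    ultimately show ?thesis using that unfolding SS_def P_def Yp_def by auto
  qed
  have bdd: "bdd_above SS" unfolding SS_def by (rule bdd_aboveI[of _ 1]) auto
  have S0: "0 \<in> SS" using memS[of 0] b_pos by simp
  have SupS: "Sup SS \<le> 1"
  proof (rule cSup_least)
    show "SS \<noteq> {}" using S0 by blast
  qed (auto simp: SS_def)
  have gdef: "g = max (min (nu / norm u) 1) (Sup SS)" unfolding g_def gam_def SS_def by simp
  have g0: "g \<ge> 0" using cSup_upper[OF S0 bdd] gdef by linarith
  have g1: "g \<le> 1" using SupS gdef by linarith
  have key: "b * (1 - g) \<le> 2 * B * g * w"
  proof (cases "g = 1")
    case True then show ?thesis using Bw by simp
  next
    case False
    hence glt: "g < 1" using g1 by simp
    define c where "c = A \<bullet> u + B * w"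
    have cgt: "c > b"
    proof (rule ccontr)
      assume "\<not> c > b"
      hence "1 \<in> SS" using memS[of 1] c_def by simp
      hence "1 \<le> Sup SS" using cSup_upper bdd by blast
      thus False using gdef glt by linarith
    qed
    have cpos: "c > 0" using cgt b_pos by linarith
    have "b / c \<in> SS" using memS[of "b/c"] cgt cpos b_pos c_def by simp
    hence "b / c \<le> g" using cSup_upper[OF _ bdd] gdef by fastforce
    hence "b \<le> g * c" using cpos by (simp add: divide_le_eq mult.commute)
    also have "g * c \<le> g * (b + 2 * B * w)" using uo2 c_def g0 by (intro mult_left_mono) auto
    finally show ?thesis by (simp add: algebra_simps)
  qed
  have "theta \<bullet> (xt t - x t) = (1 - g) * (theta \<bullet> u)"
    using xg u_def by (simp add: inner_diff_right algebra_simps)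
  also have "\<dots> \<le> (1 - g) * (S_theta * norm u)" using thu g1 by (intro mult_left_mono) auto
  also have "\<dots> \<le> (1 - g) * S_theta" using g1 Sth nu1
    by (intro mult_left_mono) (auto simp: mult_left_le)
  also have "\<dots> = S_theta * (b * (1 - g)) / b" using b_pos by simp
  also have "\<dots> \<le> S_theta * (2 * B * g * w) / b" using key Sth b_pos
    by (intro divide_right_mono mult_left_mono) auto
  also have "\<dots> = S_theta * (2 * bt t / b) * wnorm (Vinv t) (x t)"
    using xg g0 by (simp add: wn_scale w_def B_def M_def)
  finally show "theta \<bullet> (xt t - x t) \<le> S_theta * (2 * bt t / b) * wnorm (Vinv t) (x t)" .
qed

end
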